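(* Let $B_1,\dots,B_N$ be training bags, $B_i=[B_{i1},\dots,B_{iN_i}]$ with $B_{ij}\in\mathbb{R}^d$, let $\ker$ be a kernel with feature map $\Phi$, and $\nu\in(0,1)$. Let $\lambda$ minimize $\sum_{i=1}^N\|\sum_{j}\lambda_{ij}\Phi(B_{ij})-\frac1N\sum_{k}\sum_{j}\lambda_{kj}\Phi(B_{kj})\|^2$ subject to $\sum_j\lambda_{ij}=1$, $\lambda_{ij}\ge0$; set $b_i=\sum_j\lambda_{ij}\Phi(B_{ij})$. Let $\alpha$ solve $\min_\alpha\frac12\sum_{i,j}\alpha_i\alpha_j\ker(b_i,b_j)$ s.t. $0\le\alpha_i\le\frac1{\nu N}$, $\sum_i\alpha_i=1$, with $\rho$ and $l(x)=\sum_j\alpha_j\sum_k\lambda_{jk}\ker(x,B_{jk})-\rho$ as in one-class SVM. For each $i$ let $s_i=\arg\max_{j=1,\dots,N_i} l(B_{ij})$, and form the $2N$ training points $\{x_1,\dots,x_{2N}\}=\{b_1,\dots,b_N\}\cup\{B_{1s_1},\dots,B_{Ns_N}\}$. Let $\alpha'$ solve $$\min_{\alpha'}\tfrac12\sum_{p,q}\alpha'_p\alpha'_q\ker(x_p,x_q)\quad\text{s.t. } 0\le\alpha'_p\le\frac{1}{2\nu N},\ \sum_p\alpha'_p=1,$$ let $\rho'=\sum_{p=1}^{2N}\alpha'_p\ker(x_p,x_q)$ for an index $q$ with $0<\alpha'_q<\frac{1}{2\nu N}$, let $l'(x)=\sum_{p=1}^{2N}\alpha'_p\ker(x,x_p)-\rho'$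 and $f'(B_i)=\operatorname{sign}(\max_{r=1,\dots,N_i} l'(B_{ir}))$. If $\rho'\neq0$, then $\nu$ is an upper bound on the fraction of outlier bags, i.e. at most $\nu N$ of the training bags are outlier bags.
   Context: $\operatorname{sign}(y)=+1$ if $y\ge0$ and $-1$ otherwise; $\ker(x,y)=\Phi(x)\cdot\Phi(y)$, and kernel values involving virtual instances are expanded linearly, e.g. $\ker(b_i,x)=\sum_k\lambda_{ik}\ker(B_{ik},x)$. In this setting an outlier bag is a training bag $B_i$ that falls outside the decision boundary of the learned function, i.e. with $f'(B_i)=-1$. *)

theory Defs
  imports "HOL-Analysis.Analysis"
begin

definition sign_pm :: "real \<Rightarrow> real" where
  "sign_pm y = (if y \<ge> 0 then 1 else -1)"

definition ocsvm_feasible :: "nat \<Rightarrow> real \<Rightarrow> (nat \<Rightarrow> real) \<Rightarrow> bool" where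
  "ocsvm_feasible M C a \<longleftrightarrow> (\<forall>p<M. 0 \<le> a p \<and> a p \<le> C) \<and> (\<Sum>p<M. a p) = 1"

definition ocsvm_obj :: "nat \<Rightarrow> (nat \<Rightarrow> nat \<Rightarrow> real) \<Rightarrow> (nat \<Rightarrow> real) \<Rightarrow> real" where
  "ocsvm_obj M K a = 1/2 * (\<Sum>p<M. \<Sum>q<M. a p * a q * K p q)"

definition ocsvm_dual_opt :: "nat \<Rightarrow> (nat \<Rightarrow> nat \<Rightarrow> real) \<Rightarrow> real \<Rightarrow> (nat \<Rightarrow> real) \<Rightarrow> bool" where
  "ocsvm_dual_opt M K C a \<longleftrightarrow> ocsvm_feasible M C a \<and>
     (\<forall>a'. ocsvm_feasible M C a' \<longrightarrow> ocsvm_obj M K a \<le> ocsvm_obj M K a')"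

definition bag_weights_feasible :: "nat \<Rightarrow> (nat \<Rightarrow> nat) \<Rightarrow> (nat \<Rightarrow> nat \<Rightarrow> real) \<Rightarrow> bool" where
  "bag_weights_feasible N n lam \<longleftrightarrow>
     (\<forall>i<N. (\<forall>j<n i. 0 \<le> lam i j) \<and> (\<Sum>j<n i. lam i j) = 1)"

definition bag_weights_obj ::
  "nat \<Rightarrow> (nat \<Rightarrow> nat) \<Rightarrow> ('x \<Rightarrow> 'h::real_inner) \<Rightarrow> (nat \<Rightarrow> nat \<Rightarrow> 'x) \<Rightarrow> (nat \<Rightarrow> nat \<Rightarrow> real) \<Rightarrow> real" where
  "bag_weights_obj N n \<Phi> B lam =
     (\<Sum>i<N. (norm ((\<Sum>j<n i. lam i j *\<^sub>R \<Phi> (B i j))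
        - (1 / real N) *\<^sub>R (\<Sum>k<N. \<Sum>j<n k. lam k j *\<^sub>R \<Phi> (B k j))))\<^sup>2)"

definition bag_weights_opt ::
  "nat \<Rightarrow> (nat \<Rightarrow> nat) \<Rightarrow> ('x \<Rightarrow> 'h::real_inner) \<Rightarrow> (nat \<Rightarrow> nat \<Rightarrow> 'x) \<Rightarrow> (nat \<Rightarrow> nat \<Rightarrow> real) \<Rightarrow> bool" where
  "bag_weights_opt N n \<Phi> B lam \<longleftrightarrow> bag_weights_feasible N n lam \<and>
     (\<forall>lam'. bag_weights_feasible N n lam' \<longrightarrow>
        bag_weights_obj N n \<Phi> B lam \<le> bag_weights_obj N n \<Phi> B lam')"

end

theory Submission
  imports Defs
begin

lemma obj_norm:
  fixes x :: "nat \<Rightarrow> 'h::real_inner"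
  shows "ocsvm_obj M (\<lambda>p p'. x p \<bullet> x p') a = 1/2 * (norm (\<Sum>p<M. a p *\<^sub>R x p))\<^sup>2"
  unfolding ocsvm_obj_def power2_norm_eq_inner
  by (simp add: inner_sum_left inner_sum_right sum_distrib_left mult.assoc inner_commute mult.left_commute)

lemma kkt:
  fixes x :: "nat \<Rightarrow> 'h::real_inner"
  assumes opt: "ocsvm_dual_opt M (\<lambda>p p'. x p \<bullet> x p') C a"
    and q: "q < M" "0 < a q" "a q < C"
    and p: "p < M"
    and lt: "(\<Sum>j<M. a j * (x p \<bullet> x j)) < (\<Sum>j<M. a j * (x j \<bullet> x q))"
  shows "a p = C"
proof (rule ccontr)
  assume ne: "a p \<noteq> C"
  have feas: "ocsvm_feasible M C a" using opt by (simp add: ocsvm_dual_opt_def)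
  hence "a p \<le> C" using p by (simp add: ocsvm_feasible_def)
  with ne have apC: "a p < C" by simp
  define w where "w = (\<Sum>j<M. a j *\<^sub>R x j)"
  have wp: "w \<bullet> x p = (\<Sum>j<M. a j * (x p \<bullet> x j))"
    unfolding w_def by (simp add: inner_sum_left) (simp add: inner_commute)
  have wq: "w \<bullet> x q = (\<Sum>j<M. a j * (x j \<bullet> x q))"
    unfolding w_def by (simp add: inner_sum_left)
  have pq: "p \<noteq> q" using lt wp wq by auto
  define d where "d = w \<bullet> x p - w \<bullet> x q"
  have dneg: "d < 0" using lt wp wq d_def by simp
  define e where "e = (norm (x p - x q))\<^sup>2"
  have e0: "e \<ge> 0" by (simp add: e_def)
  define \<epsilon> where "\<epsilon> = min (min (C - a p) (a q)) (- d / (e + 1))"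
  have epos: "\<epsilon> > 0" using apC q dneg e0 by (simp add: \<epsilon>_def divide_neg_pos)
  have e1: "\<epsilon> \<le> C - a p" "\<epsilon> \<le> a q" by (auto simp: \<epsilon>_def)
  have e2: "\<epsilon> \<le> - d / (e + 1)" by (simp add: \<epsilon>_def)
  have "\<epsilon> * e \<le> - d / (e + 1) * e" using mult_right_mono[OF e2 e0] .
  also have "\<dots> = -d * (e / (e+1))" by simp
  also have "\<dots> < -d" using dneg e0 by (simp add: divide_simps)
  finally have ee: "\<epsilon> * e < - d" .
  define a' where "a' = (\<lambda>j. a j + (if j = p then \<epsilon> else 0) - (if j = q then \<epsilon> else 0))"
  have sa': "(\<Sum>j<M. a' j) = (\<Sum>j<M. a j) + \<epsilon> - \<epsilon>"
    unfolding a'_def using p q(1) by (simp add: sum.distrib sum_subtractf)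
  have feas': "ocsvm_feasible M C a'"
    unfolding ocsvm_feasible_def
  proof (intro conjI allI impI)
    fix j assume j: "j < M"
    have "0 \<le> a j" "a j \<le> C" using feas j by (auto simp: ocsvm_feasible_def)
    then show "0 \<le> a' j" "a' j \<le> C" using e1 epos pq apC q
      by (auto simp: a'_def)
  next
    show "(\<Sum>j<M. a' j) = 1" using sa' feas by (simp add: ocsvm_feasible_def)
  qed
  have wa': "(\<Sum>j<M. a' j *\<^sub>R x j) = w + \<epsilon> *\<^sub>R (x p - x q)"
    unfolding a'_def w_def using p q(1)
    by (simp add: scaleR_add_left scaleR_diff_left sum.distrib sum_subtractf
        if_distrib[of "\<lambda>c. c *\<^sub>R _"] scaleR_diff_right cong: if_cong)
  have "(norm (w + \<epsilon> *\<^sub>R (x p - x q)))\<^sup>2 = (norm w)\<^sup>2 + 2 * \<epsilon> * d + \<epsilon>^2 * e"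
    unfolding power2_norm_eq_inner d_def e_def
    by (simp add: inner_add_left inner_add_right inner_diff_left inner_diff_right
        inner_commute algebra_simps power2_eq_square)
  moreover have "2 * \<epsilon> * d + \<epsilon>^2 * e < 0"
  proof -
    have "2 * d + \<epsilon> * e < 0" using ee dneg by linarith
    hence "\<epsilon> * (2 * d + \<epsilon> * e) < 0" using epos by (simp add: mult_pos_neg)
    thus ?thesis by (simp add: algebra_simps power2_eq_square)
  qed
  ultimately have "ocsvm_obj M (\<lambda>p p'. x p \<bullet> x p') a' < ocsvm_obj M (\<lambda>p p'. x p \<bullet> x p') a"
    by (simp add: obj_norm wa' w_def)
  moreover have "ocsvm_obj M (\<lambda>p p'. x p \<bullet> x p') a \<le> ocsvm_obj M (\<lambda>p p'. x p \<bullet> x p') a'"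
    using opt feas' by (simp add: ocsvm_dual_opt_def)
  ultimately show False by simp
qed

theorem theorem2:
  fixes N :: nat and n :: "nat \<Rightarrow> nat"
    and B :: "nat \<Rightarrow> nat \<Rightarrow> real ^ 'd"
    and \<Phi> :: "real ^ 'd \<Rightarrow> 'h::real_inner"
    and \<nu> :: real
    and lam :: "nat \<Rightarrow> nat \<Rightarrow> real"
    and b :: "nat \<Rightarrow> 'h"
    and \<alpha> :: "nat \<Rightarrow> real" and q0 :: nat and \<rho> :: real
    and l :: "real ^ 'd \<Rightarrow> real"
    and s :: "nat \<Rightarrow> nat"
    and x :: "nat \<Rightarrow> 'h"
    and \<alpha>' :: "nat \<Rightarrow> real" and q :: nat and \<rho>' :: real
    and l' :: "'h \<Rightarrow> real"
    and f' :: "nat \<Rightarrow> real"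
  assumes N_pos: "N \<ge> 1"
    and bags_nonempty: "\<forall>i<N. n i \<ge> 1"
    and nu: "0 < \<nu>" "\<nu> < 1"
    and lam_opt: "bag_weights_opt N n \<Phi> B lam"
    and b_def: "\<forall>i<N. b i = (\<Sum>j<n i. lam i j *\<^sub>R \<Phi> (B i j))"
    and alpha_opt: "ocsvm_dual_opt N (\<lambda>i j. b i \<bullet> b j) (1 / (\<nu> * real N)) \<alpha>"
    and q0: "q0 < N" "0 < \<alpha> q0" "\<alpha> q0 < 1 / (\<nu> * real N)"
    and rho_def: "\<rho> = (\<Sum>j<N. \<alpha> j * (b j \<bullet> b q0))"
    and l_def: "\<forall>z. l z = (\<Sum>j<N. \<alpha> j * (\<Sum>k<n j. lam j k * (\<Phi> z \<bullet> \<Phi> (B j k)))) - \<rho>"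
    and s_argmax: "\<forall>i<N. s i < n i \<and> (\<forall>j<n i. l (B i j) \<le> l (B i (s i)))"
    and x_bags: "\<forall>p<N. x p = b p"
    and x_inst: "\<forall>i<N. x (N + i) = \<Phi> (B i (s i))"
    and alpha'_opt: "ocsvm_dual_opt (2 * N) (\<lambda>p p'. x p \<bullet> x p') (1 / (2 * \<nu> * real N)) \<alpha>'"
    and q: "q < 2 * N" "0 < \<alpha>' q" "\<alpha>' q < 1 / (2 * \<nu> * real N)"
    and rho'_def: "\<rho>' = (\<Sum>p<2 * N. \<alpha>' p * (x p \<bullet> x q))"
    and l'_def: "\<forall>z. l' z = (\<Sum>p<2 * N. \<alpha>' p * (z \<bullet> x p)) - \<rho>'"
    and f'_def: "\<forall>i<N. f' i = sign_pm (Max ((\<lambda>r. l' (\<Phi> (B i r))) ` {..<n i}))"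
    and rho'_nz: "\<rho>' \<noteq> 0"
  shows "real (card {i. i < N \<and> f' i = -1}) \<le> \<nu> * real N"
proof -
  define C where "C = 1 / (2 * \<nu> * real N)"
  define Ob where "Ob = {i. i < N \<and> f' i = -1}"
  have feas: "ocsvm_feasible (2*N) C \<alpha>'" using alpha'_opt by (simp add: ocsvm_dual_opt_def C_def)
  have lfeas: "bag_weights_feasible N n lam" using lam_opt by (simp add: bag_weights_opt_def)
  have outl: "\<alpha>' p = C" if p: "p < 2*N" and neg: "l' (x p) < 0" for p
  proof -
    have "(\<Sum>j<2*N. \<alpha>' j * (x p \<bullet> x j)) < (\<Sum>j<2*N. \<alpha>' j * (x j \<bullet> x q))"
      using neg l'_def rho'_def by simp
    thus ?thesis using kkt[OF alpha'_opt q p] by (simp add: C_def)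
  qed
  have lin: "l' (\<Sum>j<m. c j *\<^sub>R y j) = (\<Sum>j<m. c j * l' (y j))"
    if "(\<Sum>j<m. c j) = 1" for m c and y :: "nat \<Rightarrow> 'h"
  proof -
    have "l' (\<Sum>j<m. c j *\<^sub>R y j) = (\<Sum>j<m. c j * (\<Sum>p<2 * N. \<alpha>' p * (y j \<bullet> x p))) - \<rho>'"
      using l'_def by (simp add: inner_sum_left sum_distrib_left sum.swap[of _ "{..<m}"] mult.left_commute)
    also have "\<dots> = (\<Sum>j<m. c j * (\<Sum>p<2 * N. \<alpha>' p * (y j \<bullet> x p))) - (\<Sum>j<m. c j) * \<rho>'"
      using that by simp
    also have "\<dots> = (\<Sum>j<m. c j * l' (y j))"
      using l'_def by (simp add: sum_distrib_right sum_subtractf right_diff_distrib)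
    finally show ?thesis .
  qed
  have both: "\<alpha>' i = C \<and> \<alpha>' (N + i) = C" if iO: "i \<in> Ob" for i
  proof -
    have i: "i < N" "f' i = -1" using iO by (auto simp: Ob_def)
    let ?S = "(\<lambda>r. l' (\<Phi> (B i r))) ` {..<n i}"
    have fin: "finite ?S" "?S \<noteq> {}" using bags_nonempty i by (auto simp: lessThan_empty_iff)
    have M: "Max ?S < 0" using i f'_def by (auto simp: sign_pm_def split: if_splits)
    have le: "l' (\<Phi> (B i r)) \<le> Max ?S" if "r < n i" for r using fin that by auto
    have "l' (x (N+i)) < 0" using x_inst s_argmax i le M by (metis order.strict_trans1)
    moreover have "l' (x i) < 0"
    proof -
      have s1: "(\<Sum>j<n i. lam i j) = 1" and nn: "\<forall>j<n i. 0 \<le> lam i j"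
        using lfeas i by (auto simp: bag_weights_feasible_def)
      have "l' (x i) = (\<Sum>j<n i. lam i j * l' (\<Phi> (B i j)))"
        using x_bags b_def i lin[OF s1] by simp
      also have "\<dots> \<le> (\<Sum>j<n i. lam i j * Max ?S)"
        by (rule sum_mono) (use nn le in \<open>auto intro: mult_left_mono\<close>)
      also have "\<dots> = Max ?S" using s1 by (simp add: sum_distrib_right[symmetric])
      finally show ?thesis using M by simp
    qed
    ultimately show ?thesis using outl i by auto
  qed
  have Osub: "Ob \<subseteq> {..<N}" by (auto simp: Ob_def)
  have finO: "finite Ob" using Osub finite_subset by blast
  let ?T = "Ob \<union> (\<lambda>i. N + i) ` Ob"
  have disj: "Ob \<inter> (\<lambda>i. N + i) ` Ob = {}" using Osub by auto
  have cardT: "card ?T = 2 * card Ob"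
    using card_Un_disjoint[OF finO _ disj] finO card_image[of "\<lambda>i. N + i" Ob] by simp
  have "(\<Sum>p\<in>?T. \<alpha>' p) = (\<Sum>p\<in>?T. C)"
    by (rule sum.cong) (use both in auto)
  also have "\<dots> = 2 * real (card Ob) * C" using cardT by simp
  finally have eqT: "(\<Sum>p\<in>?T. \<alpha>' p) = 2 * real (card Ob) * C" .
  have "(\<Sum>p\<in>?T. \<alpha>' p) \<le> (\<Sum>p<2*N. \<alpha>' p)"
    by (rule sum_mono2) (use feas Osub in \<open>auto simp: ocsvm_feasible_def\<close>)
  also have "\<dots> = 1" using feas by (simp add: ocsvm_feasible_def)
  finally have "2 * real (card Ob) * C \<le> 1" using eqT by simp
  hence "real (card Ob) / (\<nu> * real N) \<le> 1" by (simp add: C_def)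
  moreover have "\<nu> * real N > 0" using nu N_pos by simp
  ultimately show ?thesis by (simp add: Ob_def divide_le_eq)
qed

end
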